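(* Let $M\geq 1$ and let $r$ be a DSIC mechanism in the bilateral cooperation model described in the context, with competitive ratio $\alpha$. For $d\in\{1,\dots,M\}$ let $B_*^d$ be the set of submodular vectors $b\in\mathbb{R}^M$ with $b_1\geq\cdots\geq b_d>0\geq b_{d+1}\geq\cdots\geq b_M$. Let $s^*\in\mathbb{R}^M$ be given by $s^*_i=i$ for all $i$. Then for every $d\in\{1,\dots,M\}$ and every $b\in B_*^d$: $$\sum_{i=1}^d r_i(b,s^* )\, b_i\ \geq\ \alpha\cdot\sum_{i=1}^d \frac{b_i}{i}.$$
   Context: Bilateral cooperation model: there are two agents, a buyer and a seller, and options $0,1,\dots,M$. A buyer utility vector is $b=(b_1,\dots,b_M)\in\mathbb{R}^M$ and a seller utility vector is $s=(s_1,\dots,s_M)\in\mathbb{R}^M$; by convention $b_0=s_0=0$. A vector $v=(v_1,\dots,v_M)$ (with $v_0=0$) is submodular if $v_{i+1}-v_i\leq v_i-v_{i-1}$ for every $i\in\{1,\dots,M-1\}$. Define $\mathrm{Feasible}(b,s)=\{i\in\{0,\dots,M\}: b_i\geq 0 \text{ and } s_i\geq 0\}$ and $OPT(b,s)=\max_{i\in \mathrm{Feasible}(b,s)}(b_i+s_i)$. A mechanism is a function $r$ mapping each pair of reported vectors $(b',s')$ to a probability vector $(r_0(b',s'),\dots,r_M(b',s'))$. The mechanism $r$ is DSIC if for all $b,b',s,s'$: $\sum_{i=1}^M r_i(b,s')\,b_i\geq \sum_{i=1}^M r_i(b',s')\,b_i$ and $\sum_{i=1}^M r_i(b',s)\,s_i\geq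 \sum_{i=1}^M r_i(b',s')\,s_i$. The gain at true vectors $(b,s)$ is $G_r(b,s)=\sum_{i=1}^M r_i(b,s)(b_i+s_i)$, and the competitive ratio is $C_r=\min_{b,s} G_r(b,s)/OPT(b,s)$; "competitive ratio $\alpha$" means $C_r=\alpha$. *)

theory Defs
  imports Complex_Main
begin

text \<open>Utility vectors in R^M are represented as functions nat => real, where
  only the entries 1..M matter; we require all other entries (in particular
  the entry 0, by the convention b_0 = 0) to be zero.\<close>

definition vecs :: "nat \<Rightarrow> (nat \<Rightarrow> real) set" where
  "vecs M = {v. \<forall>i. (i = 0 \<or> M < i) \<longrightarrow> v i = 0}"

definition submodular :: "nat \<Rightarrow> (nat \<Rightarrow> real) \<Rightarrow> bool" where
  "submodular M v \<longleftrightarrow> (\<forall>i\<in>{1..<M}. v (Suc i) - v i \<le> v i - v (i - 1))"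

definition Feasible :: "nat \<Rightarrow> (nat \<Rightarrow> real) \<Rightarrow> (nat \<Rightarrow> real) \<Rightarrow> nat set" where
  "Feasible M b s = {i\<in>{0..M}. b i \<ge> 0 \<and> s i \<ge> 0}"

definition OPT :: "nat \<Rightarrow> (nat \<Rightarrow> real) \<Rightarrow> (nat \<Rightarrow> real) \<Rightarrow> real" where
  "OPT M b s = Max ((\<lambda>i. b i + s i) ` Feasible M b s)"

definition mechanism :: "nat \<Rightarrow> ((nat \<Rightarrow> real) \<Rightarrow> (nat \<Rightarrow> real) \<Rightarrow> nat \<Rightarrow> real) \<Rightarrow> bool" where
  "mechanism M r \<longleftrightarrow> (\<forall>b\<in>vecs M. \<forall>s\<in>vecs M.
      (\<forall>i\<in>{0..M}. r b s i \<ge> 0) \<and> (\<Sum>i=0..M. r b s i) = 1)"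

definition DSIC :: "nat \<Rightarrow> ((nat \<Rightarrow> real) \<Rightarrow> (nat \<Rightarrow> real) \<Rightarrow> nat \<Rightarrow> real) \<Rightarrow> bool" where
  "DSIC M r \<longleftrightarrow> (\<forall>b\<in>vecs M. \<forall>b'\<in>vecs M. \<forall>s\<in>vecs M. \<forall>s'\<in>vecs M.
      (\<Sum>i=1..M. r b s' i * b i) \<ge> (\<Sum>i=1..M. r b' s' i * b i) \<and>
      (\<Sum>i=1..M. r b' s i * s i) \<ge> (\<Sum>i=1..M. r b' s' i * s i))"

definition gain :: "nat \<Rightarrow> ((nat \<Rightarrow> real) \<Rightarrow> (nat \<Rightarrow> real) \<Rightarrow> nat \<Rightarrow> real) \<Rightarrow>
    (nat \<Rightarrow> real) \<Rightarrow> (nat \<Rightarrow> real) \<Rightarrow> real" where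
  "gain M r b s = (\<Sum>i=1..M. r b s i * (b i + s i))"

text \<open>Competitive ratio: infimum of G/OPT over all true vector pairs with OPT > 0
  (the ratio is undefined when OPT = 0).\<close>
definition has_competitive_ratio :: "nat \<Rightarrow> ((nat \<Rightarrow> real) \<Rightarrow> (nat \<Rightarrow> real) \<Rightarrow> nat \<Rightarrow> real) \<Rightarrow> real \<Rightarrow> bool" where
  "has_competitive_ratio M r \<alpha> \<longleftrightarrow>
     (\<forall>b\<in>vecs M. \<forall>s\<in>vecs M. OPT M b s > 0 \<longrightarrow> \<alpha> \<le> gain M r b s / OPT M b s) \<and>
     (\<forall>\<beta>. (\<forall>b\<in>vecs M. \<forall>s\<in>vecs M. OPT M b s > 0 \<longrightarrow> \<beta> \<le> gain M r b s / OPT M b s) \<longrightarrow> \<beta> \<le> \<alpha>)"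

definition B_star :: "nat \<Rightarrow> nat \<Rightarrow> (nat \<Rightarrow> real) set" where
  "B_star M d = {b\<in>vecs M. submodular M b \<and> (\<forall>i\<in>{1..<M}. b (Suc i) \<le> b i) \<and>
      b d > 0 \<and> (d < M \<longrightarrow> b (Suc d) \<le> 0)}"

definition s_star :: "nat \<Rightarrow> nat \<Rightarrow> real" where
  "s_star M i = (if 1 \<le> i \<and> i \<le> M then real i else 0)"

end

theory Submission
  imports Defs
begin

lemma sstar_vecs: "s_star M \<in> vecs M"
  unfolding vecs_def s_star_def by auto

lemma scale_vecs: "c \<in> vecs M \<Longrightarrow> (\<lambda>i. e * c i) \<in> vecs M"
  unfolding vecs_def by auto

lemma diff_vecs: "b \<in> vecs M \<Longrightarrow> (\<lambda>i. b i - m * s_star M i) \<in> vecs M"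
  unfolding vecs_def s_star_def by auto

lemma dsic_b:
  assumes "DSIC M r" "b \<in> vecs M" "b' \<in> vecs M" "s \<in> vecs M"
  shows "(\<Sum>i=1..M. r b' s i * b i) \<le> (\<Sum>i=1..M. r b s i * b i)"
  using assms unfolding DSIC_def by blast

lemma opt_ge:
  assumes "j \<in> Feasible M b s"
  shows "b j + s j \<le> OPT M b s"
proof -
  have "finite (Feasible M b s)" unfolding Feasible_def by auto
  then show ?thesis unfolding OPT_def using assms by auto
qed

lemma ratio:
  assumes "has_competitive_ratio M r \<alpha>" "b \<in> vecs M" "s \<in> vecs M" "OPT M b s > 0"
  shows "\<alpha> * OPT M b s \<le> gain M r b s"
proof -
  have "\<alpha> \<le> gain M r b s / OPT M b s" using assms unfolding has_competitive_ratio_def by blast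
  then show ?thesis using assms(4) by (simp add: pos_le_divide_eq)
qed

lemma mech_nonneg:
  assumes "mechanism M r" "b \<in> vecs M" "s \<in> vecs M" "i \<le> M"
  shows "r b s i \<ge> 0"
  using assms unfolding mechanism_def by auto

lemma sstar_bound:
  assumes "mechanism M r" "b \<in> vecs M"
  shows "(\<Sum>i=1..M. r b (s_star M) i * s_star M i) \<le> real M"
proof -
  have "(\<Sum>i=1..M. r b (s_star M) i * s_star M i) \<le> (\<Sum>i=1..M. r b (s_star M) i * real M)"
  proof (rule sum_mono)
    fix i assume i: "i \<in> {1..M}"
    have "r b (s_star M) i \<ge> 0" using mech_nonneg[OF assms sstar_vecs] i by auto
    moreover have "s_star M i \<le> real M" using i by (auto simp: s_star_def)
    ultimately show "r b (s_star M) i * s_star M i \<le> r b (s_star M) i * real M" by (simp add: mult_left_mono)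
  qed
  also have "\<dots> = (\<Sum>i=1..M. r b (s_star M) i) * real M" by (simp add: sum_distrib_right)
  also have "(\<Sum>i=1..M. r b (s_star M) i) \<le> (\<Sum>i=0..M. r b (s_star M) i)"
    by (rule sum_mono2) (use mech_nonneg[OF assms sstar_vecs] in auto)
  also have "(\<Sum>i=0..M. r b (s_star M) i) = 1" using assms sstar_vecs unfolding mechanism_def by blast
  finally show ?thesis by (simp add: mult_right_mono)
qed


lemma gain_split:
  "gain M r x s = (\<Sum>i=1..M. r x s i * x i) + (\<Sum>i=1..M. r x s i * s i)"
  unfolding gain_def by (simp add: distrib_left sum.distrib)

lemma sum_scale: "(\<Sum>i=1..M. q i * (e * c i)) = e * (\<Sum>i=1..M. q i * (c i::real))"
  by (simp add: sum_distrib_left mult.left_commute)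

lemma base_case:
  assumes mech: "mechanism M r" and dsic: "DSIC M r" and cr: "has_competitive_ratio M r \<alpha>"
    and a0: "\<alpha> \<ge> 0" and M1: "1 \<le> M" and bv: "b \<in> vecs M" and b1: "b 1 \<ge> 0"
  shows "\<alpha> * b 1 \<le> (\<Sum>i=1..M. r b (s_star M) i * b i)"
proof (rule field_le_epsilon)
  fix e :: real assume e: "0 < e"
  define K where "K = (real M + 1) / e"
  have K: "K > 0" using e unfolding K_def by simp
  define x where "x = (\<lambda>i. K * b i)"
  define s where "s = s_star M"
  define q where "q = r x s"
  have xv: "x \<in> vecs M" unfolding x_def by (rule scale_vecs[OF bv])
  have sv: "s \<in> vecs M" unfolding s_def by (rule sstar_vecs)
  have U: "(\<Sum>i=1..M. q i * b i) \<le> (\<Sum>i=1..M. r b s i * b i)"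
    unfolding q_def by (rule dsic_b[OF dsic bv xv sv])
  have g: "gain M r x s = K * (\<Sum>i=1..M. q i * b i) + (\<Sum>i=1..M. q i * s i)"
    unfolding gain_split q_def x_def by (simp add: sum_distrib_left mult.left_commute)
  have F: "1 \<in> Feasible M x s" using M1 b1 K unfolding Feasible_def x_def s_def s_star_def by auto
  have O: "K * b 1 + 1 \<le> OPT M x s" using opt_ge[OF F] unfolding x_def s_def s_star_def using M1 by simp
  have Opos: "OPT M x s > 0" using O K b1 by (smt (verit) mult_nonneg_nonneg)
  have R: "\<alpha> * OPT M x s \<le> gain M r x s" by (rule ratio[OF cr xv sv Opos])
  have "\<alpha> * (K * b 1) \<le> \<alpha> * OPT M x s" using O a0 by (intro mult_left_mono) auto
  moreover have "(\<Sum>i=1..M. q i * s i) \<le> real M" unfolding q_def s_def by (rule sstar_bound[OF mech xv])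
  ultimately have "K * (\<alpha> * b 1) \<le> K * ((\<Sum>i=1..M. r b s i * b i) + real M / K)"
    using R g U K by (simp add: algebra_simps) (smt (verit) mult_left_mono)
  then have "\<alpha> * b 1 \<le> (\<Sum>i=1..M. r b s i * b i) + real M / K" using K by simp
  moreover have "real M / K \<le> e" using e unfolding K_def by (simp add: field_simps)
  ultimately show "\<alpha> * b 1 \<le> (\<Sum>i=1..M. r b (s_star M) i * b i) + e" unfolding s_def by linarith
qed


lemma step_case:
  assumes mech: "mechanism M r" and dsic: "DSIC M r" and cr: "has_competitive_ratio M r \<alpha>"
    and a0: "\<alpha> \<ge> 0" and n1: "1 \<le> n" and DM: "Suc n \<le> M" and bv: "b \<in> vecs M"
    and mono: "\<forall>i j. 1 \<le> i \<longrightarrow> i \<le> j \<longrightarrow> j \<le> Suc n \<longrightarrow> b j / real j \<le> b i / real i"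
    and bD: "b (Suc n) \<ge> 0"
    and tail: "\<forall>i. Suc n < i \<longrightarrow> i \<le> M \<longrightarrow> b i / real i \<le> b (Suc n) / real (Suc n)"
    and IH: "\<And>c. c \<in> vecs M \<Longrightarrow>
       (\<forall>i j. 1 \<le> i \<longrightarrow> i \<le> j \<longrightarrow> j \<le> n \<longrightarrow> c j / real j \<le> c i / real i) \<Longrightarrow> c n \<ge> 0 \<Longrightarrow>
       (\<forall>i. n < i \<longrightarrow> i \<le> M \<longrightarrow> c i / real i \<le> c n / real n) \<Longrightarrow>
       \<alpha> * (\<Sum>i=1..n. c i / real i) \<le> (\<Sum>i=1..M. r c (s_star M) i * c i)"
  shows "\<alpha> * (\<Sum>i=1..Suc n. b i / real i) \<le> (\<Sum>i=1..M. r b (s_star M) i * b i)"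
proof -
  define D where "D = Suc n"
  define s where "s = s_star M"
  define \<mu> where "\<mu> = b D / real D"
  define c where "c = (\<lambda>i. b i - \<mu> * s i)"
  have mu0: "\<mu> \<ge> 0" using bD unfolding \<mu>_def D_def by simp
  have sv: "s \<in> vecs M" unfolding s_def by (rule sstar_vecs)
  have cv: "c \<in> vecs M" unfolding c_def s_def by (rule diff_vecs[OF bv])
  have cq: "c j / real j = b j / real j - \<mu>" if "1 \<le> j" "j \<le> M" for j
    using that unfolding c_def s_def s_star_def by (simp add: field_simps)
  have cD: "c D = 0" unfolding c_def s_def s_star_def \<mu>_def D_def using DM by simp
  have bc: "b i = c i + \<mu> * s i" for i unfolding c_def by simp
  have c1: "\<forall>i j. 1 \<le> i \<longrightarrow> i \<le> j \<longrightarrow> j \<le> n \<longrightarrow> c j / real j \<le> c i / real i"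
    using mono cq DM by auto
  have cn: "c n / real n \<ge> 0" using cq[of n] mono[rule_format, of n D] n1 DM unfolding \<mu>_def D_def by auto
  then have c2: "c n \<ge> 0" using n1 by (simp add: zero_le_divide_iff)
  have c3: "\<forall>i. n < i \<longrightarrow> i \<le> M \<longrightarrow> c i / real i \<le> c n / real n"
  proof (intro allI impI)
    fix i assume i: "n < i" "i \<le> M"
    show "c i / real i \<le> c n / real n"
    proof (cases "i = D")
      case True then show ?thesis using cD cn by simp
    next
      case False then have "D < i" using i unfolding D_def by auto
      then have "b i / real i \<le> \<mu>" using tail i unfolding \<mu>_def D_def by auto
      then show ?thesis using cq[of i] i cn by auto
    qed
  qed
  have IHc: "\<alpha> * (\<Sum>i=1..n. c i / real i) \<le> (\<Sum>i=1..M. r c s i * c i)"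
    unfolding s_def by (rule IH[OF cv c1 c2 c3])
  have sumc: "(\<Sum>i=1..n. c i / real i) = (\<Sum>i=1..n. b i / real i) - real n * \<mu>"
  proof -
    have "(\<Sum>i=1..n. c i / real i) = (\<Sum>i=1..n. b i / real i - \<mu>)"
      by (rule sum.cong) (use cq DM in auto)
    then show ?thesis by (simp add: sum_subtractf)
  qed
  define Uc where "Uc = (\<Sum>i=1..M. r c s i * c i)"
  have main: "\<alpha> * (\<Sum>i=1..D. b i / real i) \<le> (\<Sum>i=1..M. r b s i * b i)"
  proof (rule field_le_epsilon)
    fix e :: real assume e: "0 < e"
    define \<epsilon> where "\<epsilon> = e / (\<mu> * \<bar>Uc\<bar> + 1)"
    have den: "\<mu> * \<bar>Uc\<bar> + 1 > 0" using mu0 by (smt (verit) mult_nonneg_nonneg abs_ge_zero)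
    have ep: "\<epsilon> > 0" unfolding \<epsilon>_def using e den by simp
    have small: "\<mu> * \<epsilon> * Uc \<le> e"
    proof -
      have "\<mu> * \<epsilon> * Uc \<le> \<mu> * \<epsilon> * \<bar>Uc\<bar>" using mu0 ep by (intro mult_left_mono) auto
      also have "\<dots> = e * (\<mu> * \<bar>Uc\<bar>) / (\<mu> * \<bar>Uc\<bar> + 1)" unfolding \<epsilon>_def by simp
      also have "\<dots> \<le> e" using den e by (simp add: field_simps)
      finally show ?thesis .
    qed
    define x where "x = (\<lambda>i. \<epsilon> * c i)"
    define q where "q = r x s"
    have xv: "x \<in> vecs M" unfolding x_def by (rule scale_vecs[OF cv])
    have U1: "(\<Sum>i=1..M. q i * b i) \<le> (\<Sum>i=1..M. r b s i * b i)"
      unfolding q_def by (rule dsic_b[OF dsic bv xv sv])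
    have split: "(\<Sum>i=1..M. q i * b i) = (\<Sum>i=1..M. q i * c i) + \<mu> * (\<Sum>i=1..M. q i * s i)"
      by (simp add: bc distrib_left sum.distrib sum_distrib_left mult.left_commute)
    have le1: "(\<Sum>i=1..M. q i * c i) \<le> Uc"
      unfolding q_def Uc_def by (rule dsic_b[OF dsic cv xv sv])
    have le2: "\<epsilon> * Uc \<le> \<epsilon> * (\<Sum>i=1..M. q i * c i)"
      using dsic_b[OF dsic xv cv sv] unfolding q_def Uc_def x_def
      by (simp add: sum_distrib_left mult.left_commute)
    have eqc: "(\<Sum>i=1..M. q i * c i) = Uc" using le1 le2 ep by simp
    have g: "gain M r x s = \<epsilon> * (\<Sum>i=1..M. q i * c i) + (\<Sum>i=1..M. q i * s i)"
      unfolding gain_split q_def x_def by (simp add: sum_distrib_left mult.left_commute)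
    have F: "D \<in> Feasible M x s" using DM cD unfolding Feasible_def x_def s_def s_star_def D_def by auto
    have O: "real D \<le> OPT M x s" using opt_ge[OF F] cD DM unfolding x_def s_def s_star_def D_def by simp
    have Opos: "OPT M x s > 0" using O unfolding D_def by linarith
    have R: "\<alpha> * OPT M x s \<le> gain M r x s" by (rule ratio[OF cr xv sv Opos])
    have "\<alpha> * real D \<le> \<alpha> * OPT M x s" using O a0 by (intro mult_left_mono) auto
    moreover have g2: "gain M r x s = \<epsilon> * Uc + (\<Sum>i=1..M. q i * s i)" using g eqc by simp
    ultimately have qs: "\<alpha> * real D - \<epsilon> * Uc \<le> (\<Sum>i=1..M. q i * s i)" using R by linarith
    have "\<mu> * (\<alpha> * real D - \<epsilon> * Uc) \<le> \<mu> * (\<Sum>i=1..M. q i * s i)"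
      using qs mu0 by (rule mult_left_mono)
    then have Ub: "Uc + \<mu> * \<alpha> * real D - e \<le> (\<Sum>i=1..M. r b s i * b i)"
      using U1 split eqc small by (simp add: algebra_simps)
    have "\<alpha> * (\<Sum>i=1..D. b i / real i) = \<alpha> * (\<Sum>i=1..n. b i / real i) + \<alpha> * \<mu>"
      unfolding D_def \<mu>_def by (simp add: distrib_left)
    also have "\<dots> = \<alpha> * (\<Sum>i=1..n. c i / real i) + \<mu> * \<alpha> * real D"
      unfolding sumc D_def by (simp add: algebra_simps)
    also have "\<dots> \<le> Uc + \<mu> * \<alpha> * real D" using IHc unfolding Uc_def by simp
    finally show "\<alpha> * (\<Sum>i=1..D. b i / real i) \<le> (\<Sum>i=1..M. r b s i * b i) + e" using Ub by linarith
  qed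
  then show ?thesis unfolding D_def s_def .
qed


lemma main_ind:
  assumes mech: "mechanism M r" and dsic: "DSIC M r" and cr: "has_competitive_ratio M r \<alpha>"
    and a0: "\<alpha> \<ge> 0" and d1: "1 \<le> d"
  shows "\<forall>b. d \<le> M \<longrightarrow> b \<in> vecs M \<longrightarrow>
       (\<forall>i j. 1 \<le> i \<longrightarrow> i \<le> j \<longrightarrow> j \<le> d \<longrightarrow> b j / real j \<le> b i / real i) \<longrightarrow> b d \<ge> 0 \<longrightarrow>
       (\<forall>i. d < i \<longrightarrow> i \<le> M \<longrightarrow> b i / real i \<le> b d / real d) \<longrightarrow>
       \<alpha> * (\<Sum>i=1..d. b i / real i) \<le> (\<Sum>i=1..M. r b (s_star M) i * b i)"
  using d1
proof (induction d rule: nat_induct_at_least)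
  case base
  show ?case using base_case[OF mech dsic cr a0] by auto
next
  case (Suc n)
  show ?case
  proof (intro allI impI)
    fix b assume A: "Suc n \<le> M" "b \<in> vecs M"
      "\<forall>i j. 1 \<le> i \<longrightarrow> i \<le> j \<longrightarrow> j \<le> Suc n \<longrightarrow> b j / real j \<le> b i / real i"
      "b (Suc n) \<ge> 0" "\<forall>i. Suc n < i \<longrightarrow> i \<le> M \<longrightarrow> b i / real i \<le> b (Suc n) / real (Suc n)"
    show "\<alpha> * (\<Sum>i=1..Suc n. b i / real i) \<le> (\<Sum>i=1..M. r b (s_star M) i * b i)"
      by (rule step_case[OF mech dsic cr a0 Suc(1) A]) (use Suc(2) A(1) in auto)
  qed
qed

lemma submod_aux:
  assumes sm: "submodular M b" and b0: "b 0 = 0"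
  shows "k < M \<Longrightarrow> real k * b (Suc k) \<le> real (Suc k) * b k"
proof (induction k)
  case 0 then show ?case using b0 by simp
next
  case (Suc k)
  have IH: "real k * b (Suc k) \<le> real (Suc k) * b k" using Suc by simp
  have "Suc k \<in> {1..<M}" using Suc by auto
  then have S0: "b (Suc (Suc k)) - b (Suc k) \<le> b (Suc k) - b (Suc k - 1)" using sm unfolding submodular_def by blast
  then have S: "b (Suc (Suc k)) - b (Suc k) \<le> b (Suc k) - b k" by simp
  have "real (Suc k) * (b (Suc (Suc k)) - b (Suc k)) \<le> real (Suc k) * (b (Suc k) - b k)"
    using S by (intro mult_left_mono) auto
  then show ?case using IH by (simp add: algebra_simps)
qed

lemma submod_ratio:
  assumes sm: "submodular M b" and b0: "b 0 = 0"
  shows "1 \<le> i \<Longrightarrow> i \<le> j \<Longrightarrow> j \<le> M \<Longrightarrow> b j / real j \<le> b i / real i"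
proof (induction j)
  case 0 then show ?case by simp
next
  case (Suc j)
  show ?case
  proof (cases "i = Suc j")
    case True then show ?thesis by simp
  next
    case False
    then have ij: "i \<le> j" "1 \<le> j" "j < M" using Suc by auto
    have "real j * b (Suc j) \<le> real (Suc j) * b j" using submod_aux[OF sm b0 ij(3)] .
    then have "b (Suc j) / real (Suc j) \<le> b j / real j" using ij(2)
      by (simp add: divide_simps mult.commute del: of_nat_Suc)
    moreover have "b j / real j \<le> b i / real i" using Suc.IH Suc.prems ij by auto
    ultimately show ?thesis by linarith
  qed
qed

theorem lemma3:
  fixes M :: nat and r :: "(nat \<Rightarrow> real) \<Rightarrow> (nat \<Rightarrow> real) \<Rightarrow> nat \<Rightarrow> real" and \<alpha> :: real
  assumes "M \<ge> 1"
    and "mechanism M r"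
    and "DSIC M r"
    and "has_competitive_ratio M r \<alpha>"
  shows "\<forall>d\<in>{1..M}. \<forall>b\<in>B_star M d.
           (\<Sum>i=1..d. r b (s_star M) i * b i) \<ge> \<alpha> * (\<Sum>i=1..d. b i / real i)"
proof (intro ballI)
  fix d b assume d: "d \<in> {1..M}" and bB: "b \<in> B_star M d"
  have bv: "b \<in> vecs M" and sm: "submodular M b" and mon: "\<forall>i\<in>{1..<M}. b (Suc i) \<le> b i"
    and bd: "b d > 0" and bd1: "d < M \<longrightarrow> b (Suc d) \<le> 0"
    using bB unfolding B_star_def by auto
  have b0: "b 0 = 0" using bv unfolding vecs_def by auto
  have rn: "r b (s_star M) i \<ge> 0" if "i \<le> M" for i
    using mech_nonneg[OF assms(2) bv sstar_vecs that] .
  have monle: "b j \<le> b i" if "1 \<le> i" "i \<le> j" "j \<le> M" for i j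
    using that
  proof (induction j)
    case 0 then show ?case by simp
  next
    case (Suc j)
    show ?case
    proof (cases "i = Suc j")
      case True then show ?thesis by simp
    next
      case False then have ij: "i \<le> j" "j \<in> {1..<M}" using Suc by auto
      have "b (Suc j) \<le> b j" using mon ij by auto
      moreover have "b j \<le> b i" using Suc.IH Suc.prems ij by auto
      ultimately show ?thesis by linarith
    qed
  qed
  have bpos: "b i > 0" if "1 \<le> i" "i \<le> d" for i using monle[of i d] that d bd by auto
  have Spos: "(\<Sum>i=1..d. b i / real i) \<ge> 0"
    by (rule sum_nonneg) (use bpos in \<open>auto intro: divide_nonneg_nonneg less_imp_le\<close>)
  have Lpos: "(\<Sum>i=1..d. r b (s_star M) i * b i) \<ge> 0"
  proof (rule sum_nonneg)
    fix i assume i: "i \<in> {1..d}"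
    then have "b i > 0" "r b (s_star M) i \<ge> 0" using bpos rn d by auto
    then show "r b (s_star M) i * b i \<ge> 0" by simp
  qed
  show "(\<Sum>i=1..d. r b (s_star M) i * b i) \<ge> \<alpha> * (\<Sum>i=1..d. b i / real i)"
  proof (cases "\<alpha> \<ge> 0")
    case False
    then have "\<alpha> * (\<Sum>i=1..d. b i / real i) \<le> 0" using Spos by (simp add: mult_nonpos_nonneg)
    then show ?thesis using Lpos by linarith
  next
    case True
    have ratio_mono: "b j / real j \<le> b i / real i" if "1 \<le> i" "i \<le> j" "j \<le> M" for i j
      using submod_ratio[OF sm b0] that .
    have key: "\<alpha> * (\<Sum>i=1..d. b i / real i) \<le> (\<Sum>i=1..M. r b (s_star M) i * b i)"
      using main_ind[OF assms(2,3,4) True, of d] d bv ratio_mono bd by auto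
    have split: "(\<Sum>i=1..M. r b (s_star M) i * b i) =
        (\<Sum>i=1..d. r b (s_star M) i * b i) + (\<Sum>i=Suc d..M. r b (s_star M) i * b i)"
    proof -
      have M: "M = d + (M - d)" using d by auto
      have "(\<Sum>i=1..d + (M - d). r b (s_star M) i * b i) =
        (\<Sum>i=1..d. r b (s_star M) i * b i) + (\<Sum>i=d+1..d + (M - d). r b (s_star M) i * b i)"
        by (rule sum.ub_add_nat) simp
      then show ?thesis using M by simp
    qed
    have tailneg: "(\<Sum>i=Suc d..M. r b (s_star M) i * b i) \<le> 0"
    proof (rule sum_nonpos)
      fix i assume i: "i \<in> {Suc d..M}"
      then have "b i \<le> b (Suc d)" using monle[of "Suc d" i] by auto
      also have "\<dots> \<le> 0" using bd1 i by auto
      finally show "r b (s_star M) i * b i \<le> 0" using rn i by (auto intro: mult_nonneg_nonpos)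
    qed
    show ?thesis using key split tailneg by linarith
  qed
qed

end
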